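(* Let $\mathfrak{A}_q$ be a quantum cluster algebra with quantum seed $(\mathbf{x},B,\Lambda)$, $\mathbf{x}=(x_1,\ldots,x_n)$, assume that all prime ideals of $\mathfrak{A}_q$ are completely prime, and assume that the cluster $\mathbf{x}$ is super-toric. Let $\mathcal{I}$ be a torus invariant non-zero proper prime ideal of $\mathfrak{A}_q$ such that $\mathcal{I}\cap\mathbf{x}=\{x_{k+1},\ldots,x_n\}$. Then $\mathcal{I}\cap\mathbb{C}_\Lambda[x_1,\ldots,x_n]$ is generated by $\{x_{k+1},\ldots,x_n\}$.
   Context: A compatible pair $(B,\Lambda)$ consists of an $m\times n$ integer matrix $B$ ($m\le n$) with skew-symmetrizable principal $m\times m$ part and a skew-symmetric $n\times n$ integer matrix $\Lambda=(\lambda_{ij})$ such that $B\Lambda$ has entries $d_i\delta_{ij}$ with $d_i$ positive integers. In the quantum cluster algebra, the seed variables generate the quantum affine space $\mathbb{C}_\Lambda[x_1,\ldots,x_n]$ with relations $x_ix_j=q^{\lambda_{ij}}x_jx_i$, and $\mathfrak{A}_q\subset\mathbb{C}_\Lambda[x_1^{\pm1},\ldots,x_n^{\pm1}]$. Torus action: with $T=\ker(B)\subset\mathbb{Z}^n$, each $\mathbf{b}\in T$ and $\alpha\in\mathbb{C}^*$ give the global toric action $x_i\mapsto\alpha^{b_i}x_i$, acting on $\mathfrak{A}_q$ by automorphisms; torus invariant means stable under all of these. Super-toric: for $1\le k\le n$ let $T_{[1,k]}\subset\mathbb{Z}^k$ be the projection of $T$ onto the first $k$ coordinates and $\Lambda_{[1,k]}$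 the principal $k\times k$ submatrix of $\Lambda$; the cluster is super-toric if $\mathrm{rk}(T_{[1,k]}+\mathrm{Im}(\Lambda_{[1,k]}))=k$ for all $k=1,\ldots,n$. Completely prime: $ab\in\mathcal{I}\Rightarrow a\in\mathcal{I}$ or $b\in\mathcal{I}$. *)

theory Defs
  imports Complex_Main
begin

(* Indices are 0-based: the paper's x_1..x_n are xvar 0 .. xvar (n-1);
   mutable indices are 0..m-1, frozen ones m..n-1.
   t is a fixed square root of q (q = t^2), needed for quantum mutation. *)

type_synonym expo = "nat \<Rightarrow> int"
type_synonym qelt = "expo \<Rightarrow> complex"
type_synonym imat = "nat \<Rightarrow> nat \<Rightarrow> int"

definition compatible :: "nat \<Rightarrow> nat \<Rightarrow> imat \<Rightarrow> imat \<Rightarrow> bool" where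
  "compatible m n B L \<longleftrightarrow> m \<le> n
     \<and> (\<exists>d::nat \<Rightarrow> int. (\<forall>i<m. 0 < d i) \<and> (\<forall>i<m. \<forall>j<m. d i * B i j = - (d j * B j i)))
     \<and> (\<forall>i<n. \<forall>j<n. L i j = - L j i)
     \<and> (\<exists>d::nat \<Rightarrow> int. \<forall>i<m. 0 < d i \<and>
          (\<forall>j<n. (\<Sum>l<n. B i l * L l j) = (if i = j then d i else 0)))"

text \<open>An element is a coefficient function on exponent vectors; the basis element
  for exponent a is the ordered monomial x_1^{a_1} ... x_n^{a_n}.\<close>

definition qsupp :: "qelt \<Rightarrow> expo set" where
  "qsupp f = {a. f a \<noteq> 0}"

definition qtorus :: "nat \<Rightarrow> qelt set" where
  "qtorus n = {f. finite (qsupp f) \<and> (\<forall>a\<in>qsupp f. \<forall>j\<ge>n. a j = 0)}"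

definition qaffine :: "nat \<Rightarrow> qelt set" where
  "qaffine n = {f \<in> qtorus n. \<forall>a\<in>qsupp f. \<forall>j. 0 \<le> a j}"

definition sigma :: "nat \<Rightarrow> imat \<Rightarrow> expo \<Rightarrow> expo \<Rightarrow> int" where
  "sigma n L a b = (\<Sum>i<n. \<Sum>j<i. a i * L i j * b j)"

text \<open>X^a X^b = q^(sigma a b) X^(a+b), where q = t^2, since x_i x_j = q^(lambda_ij) x_j x_i.\<close>
definition qmult :: "nat \<Rightarrow> imat \<Rightarrow> complex \<Rightarrow> qelt \<Rightarrow> qelt \<Rightarrow> qelt" where
  "qmult n L t f g = (\<lambda>c. \<Sum>p\<in>{p \<in> qsupp f \<times> qsupp g. (\<lambda>i. fst p i + snd p i) = c}.
       f (fst p) * g (snd p) * t powi (2 * sigma n L (fst p) (snd p)))"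

definition qadd :: "qelt \<Rightarrow> qelt \<Rightarrow> qelt" where
  "qadd f g = (\<lambda>c. f c + g c)"

definition qscale :: "complex \<Rightarrow> qelt \<Rightarrow> qelt" where
  "qscale s f = (\<lambda>c. s * f c)"

definition qzero :: qelt where
  "qzero = (\<lambda>c. 0)"

definition qone :: qelt where
  "qone = (\<lambda>c. if c = (\<lambda>i. 0) then 1 else 0)"

definition xvar :: "nat \<Rightarrow> qelt" where
  "xvar i = (\<lambda>c. if c = (\<lambda>j. if j = i then 1 else 0) then 1 else 0)"

fun qpow :: "nat \<Rightarrow> imat \<Rightarrow> complex \<Rightarrow> qelt \<Rightarrow> nat \<Rightarrow> qelt" where
  "qpow n L t y 0 = qone"
| "qpow n L t y (Suc k) = qmult n L t y (qpow n L t y k)"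

definition qprod :: "nat \<Rightarrow> imat \<Rightarrow> complex \<Rightarrow> (nat \<Rightarrow> qelt) \<Rightarrow> expo \<Rightarrow> qelt" where
  "qprod n L t ys v = foldl (\<lambda>acc i. qmult n L t acc (qpow n L t (ys i) (nat (v i)))) qone [0..<n]"

type_synonym qseed = "(nat \<Rightarrow> qelt) \<times> imat \<times> imat"

definition mutB :: "imat \<Rightarrow> nat \<Rightarrow> imat" where
  "mutB B k = (\<lambda>i j. if i = k \<or> j = k then - B i j
                      else B i j + sgn (B i k) * max 0 (B i k * B k j))"

definition mutL :: "nat \<Rightarrow> imat \<Rightarrow> imat \<Rightarrow> nat \<Rightarrow> imat" where
  "mutL n B L k = (let E = (\<lambda>a j. if j \<noteq> k then (if a = j then 1 else 0)
                                   else if a = k then -1 else max 0 (- B k a))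
                    in (\<lambda>i j. \<Sum>a<n. \<Sum>c<n. E a i * L a c * E c j))"

text \<open>Weyl-ordered monomial M(v) = q^(-sigma'(v,v)/2) y^v of a seed (v \<ge> 0),
  computed inside the ambient quantum torus (with form L0).\<close>
definition wmon :: "nat \<Rightarrow> imat \<Rightarrow> complex \<Rightarrow> qseed \<Rightarrow> expo \<Rightarrow> qelt" where
  "wmon n L0 t s v = qscale (t powi (- sigma n (snd (snd s)) v v)) (qprod n L0 t (fst s) v)"

text \<open>Quantum exchange relation: the new variable y satisfies
  x_k y = q^(Lambda(e_k,b+)/2) M(b+) + q^(Lambda(e_k,b-)/2) M(b-),
  equivalently y = M(-e_k + b+) + M(-e_k + b-), b = k-th row of B.\<close>
definition newvar :: "nat \<Rightarrow> imat \<Rightarrow> complex \<Rightarrow> qseed \<Rightarrow> nat \<Rightarrow> qelt" where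
  "newvar n L0 t s k =
    (let ys = fst s; B = fst (snd s); L = snd (snd s);
         bp = (\<lambda>j. if j < n then max 0 (B k j) else 0);
         bm = (\<lambda>j. if j < n then max 0 (- B k j) else 0);
         rhs = qadd (qscale (t powi (\<Sum>j<n. L k j * bp j)) (wmon n L0 t s bp))
                    (qscale (t powi (\<Sum>j<n. L k j * bm j)) (wmon n L0 t s bm))
     in THE y. y \<in> qtorus n \<and> qmult n L0 t (ys k) y = rhs)"

definition mutate :: "nat \<Rightarrow> imat \<Rightarrow> complex \<Rightarrow> nat \<Rightarrow> qseed \<Rightarrow> qseed" where
  "mutate n L0 t k s =
     ((fst s)(k := newvar n L0 t s k), mutB (fst (snd s)) k, mutL n (fst (snd s)) (snd (snd s)) k)"

inductive_set seeds :: "nat \<Rightarrow> nat \<Rightarrow> imat \<Rightarrow> imat \<Rightarrow> complex \<Rightarrow> qseed set"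
  for m n B L t where
  init: "(xvar, B, L) \<in> seeds m n B L t"
| mut: "s \<in> seeds m n B L t \<Longrightarrow> k < m \<Longrightarrow> mutate n L t k s \<in> seeds m n B L t"

definition cluster_vars :: "nat \<Rightarrow> nat \<Rightarrow> imat \<Rightarrow> imat \<Rightarrow> complex \<Rightarrow> qelt set" where
  "cluster_vars m n B L t = {fst s i | s i. s \<in> seeds m n B L t \<and> i < n}"

inductive_set qgen :: "nat \<Rightarrow> imat \<Rightarrow> complex \<Rightarrow> qelt set \<Rightarrow> qelt set"
  for n L t S where
  one: "qone \<in> qgen n L t S"
| gen: "x \<in> S \<Longrightarrow> x \<in> qgen n L t S"
| add: "x \<in> qgen n L t S \<Longrightarrow> y \<in> qgen n L t S \<Longrightarrow> qadd x y \<in> qgen n L t S"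
| mult: "x \<in> qgen n L t S \<Longrightarrow> y \<in> qgen n L t S \<Longrightarrow> qmult n L t x y \<in> qgen n L t S"
| scale: "x \<in> qgen n L t S \<Longrightarrow> qscale c x \<in> qgen n L t S"

text \<open>The quantum cluster algebra A_q (frozen variables not inverted).\<close>
definition qca :: "nat \<Rightarrow> nat \<Rightarrow> imat \<Rightarrow> imat \<Rightarrow> complex \<Rightarrow> qelt set" where
  "qca m n B L t = qgen n L t (cluster_vars m n B L t)"

definition is_ideal :: "nat \<Rightarrow> imat \<Rightarrow> complex \<Rightarrow> qelt set \<Rightarrow> qelt set \<Rightarrow> bool" where
  "is_ideal n L t R I \<longleftrightarrow> I \<subseteq> R \<and> qzero \<in> I
     \<and> (\<forall>a\<in>I. \<forall>b\<in>I. qadd a b \<in> I)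
     \<and> (\<forall>a\<in>I. \<forall>r\<in>R. qmult n L t r a \<in> I \<and> qmult n L t a r \<in> I)"

definition prime_ideal :: "nat \<Rightarrow> imat \<Rightarrow> complex \<Rightarrow> qelt set \<Rightarrow> qelt set \<Rightarrow> bool" where
  "prime_ideal n L t R P \<longleftrightarrow> is_ideal n L t R P \<and> P \<noteq> R
     \<and> (\<forall>J K. is_ideal n L t R J \<longrightarrow> is_ideal n L t R K \<longrightarrow>
              (\<forall>a\<in>J. \<forall>b\<in>K. qmult n L t a b \<in> P) \<longrightarrow> J \<subseteq> P \<or> K \<subseteq> P)"

definition completely_prime :: "nat \<Rightarrow> imat \<Rightarrow> complex \<Rightarrow> qelt set \<Rightarrow> qelt set \<Rightarrow> bool" where
  "completely_prime n L t R P \<longleftrightarrow> is_ideal n L t R P \<and> P \<noteq> R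
     \<and> (\<forall>a\<in>R. \<forall>b\<in>R. qmult n L t a b \<in> P \<longrightarrow> a \<in> P \<or> b \<in> P)"

definition ideal_gen :: "nat \<Rightarrow> imat \<Rightarrow> complex \<Rightarrow> qelt set \<Rightarrow> qelt set \<Rightarrow> qelt set" where
  "ideal_gen n L t R S = \<Inter>{J. is_ideal n L t R J \<and> S \<subseteq> J}"

definition kerB :: "nat \<Rightarrow> nat \<Rightarrow> imat \<Rightarrow> expo set" where
  "kerB m n B = {b. (\<forall>j\<ge>n. b j = 0) \<and> (\<forall>i<m. (\<Sum>j<n. B i j * b j) = 0)}"

text \<open>x_i \<mapsto> alpha^(b_i) x_i, so X^a \<mapsto> alpha^(b.a) X^a.\<close>
definition toric_act :: "nat \<Rightarrow> expo \<Rightarrow> complex \<Rightarrow> qelt \<Rightarrow> qelt" where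
  "toric_act n b \<alpha> f = (\<lambda>a. \<alpha> powi (\<Sum>i<n. b i * a i) * f a)"

definition torus_invariant :: "nat \<Rightarrow> nat \<Rightarrow> imat \<Rightarrow> qelt set \<Rightarrow> bool" where
  "torus_invariant m n B I \<longleftrightarrow>
     (\<forall>b\<in>kerB m n B. \<forall>\<alpha>::complex. \<alpha> \<noteq> 0 \<longrightarrow> (\<forall>f\<in>I. toric_act n b \<alpha> f \<in> I))"

definition zindep :: "nat \<Rightarrow> expo list \<Rightarrow> bool" where
  "zindep k vs \<longleftrightarrow> (\<forall>c::nat \<Rightarrow> int.
      (\<forall>j<k. (\<Sum>i<length vs. c i * (vs ! i) j) = 0) \<longrightarrow> (\<forall>i<length vs. c i = 0))"

definition grp_rank :: "nat \<Rightarrow> expo set \<Rightarrow> nat" where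
  "grp_rank k H = (GREATEST r. \<exists>vs. length vs = r \<and> set vs \<subseteq> H \<and> zindep k vs)"

definition Tproj :: "nat \<Rightarrow> nat \<Rightarrow> imat \<Rightarrow> nat \<Rightarrow> expo set" where
  "Tproj m n B k = {(\<lambda>i. if i < k then b i else 0) | b. b \<in> kerB m n B}"

definition ImL :: "imat \<Rightarrow> nat \<Rightarrow> expo set" where
  "ImL L k = {(\<lambda>i. if i < k then (\<Sum>j<k. L i j * c j) else 0) | c. True}"

definition super_toric :: "nat \<Rightarrow> nat \<Rightarrow> imat \<Rightarrow> imat \<Rightarrow> bool" where
  "super_toric m n B L \<longleftrightarrow>
     (\<forall>k\<in>{1..n}. grp_rank k {(\<lambda>i. u i + v i) | u v. u \<in> Tproj m n B k \<and> v \<in> ImL L k} = k)"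

end

theory Submission
  imports Defs
begin

definition mon :: "expo \<Rightarrow> qelt" where "mon a = (\<lambda>c. if c = a then 1 else 0)"
definition uv :: "nat \<Rightarrow> expo" where "uv i = (\<lambda>j. if j = i then 1 else 0)"

lemma fun_shift_iff: "((\<lambda>i. x i + e i) = (c::expo)) = (x = (\<lambda>i. c i - e i))"
  by (auto simp: fun_eq_iff algebra_simps)

lemma fun_shift_iff2: "((\<lambda>i. e i + x i) = (c::expo)) = (x = (\<lambda>i. c i - e i))"
  by (auto simp: fun_eq_iff algebra_simps)

lemma qmult_right_single:
  "qmult n L t f (\<lambda>c. if c = e then s else 0) =
   (\<lambda>c. f (\<lambda>i. c i - e i) * s * t powi (2 * sigma n L (\<lambda>i. c i - e i) e))"
proof
  fix c
  show "qmult n L t f (\<lambda>c. if c = e then s else 0) c =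
     f (\<lambda>i. c i - e i) * s * t powi (2 * sigma n L (\<lambda>i. c i - e i) e)"
  proof (cases "s = 0 \<or> f (\<lambda>i. c i - e i) = 0")
    case True
    have E: "{p \<in> qsupp f \<times> qsupp (\<lambda>c. if c = e then s else 0). (\<lambda>i. fst p i + snd p i) = c} = {}"
      using True by (auto simp: qsupp_def fun_shift_iff split: if_splits)
    have "qmult n L t f (\<lambda>c. if c = e then s else 0) c = 0" unfolding qmult_def by (simp only: E sum.empty)
    then show ?thesis using True by auto
  next
    case False
    have "{p \<in> qsupp f \<times> qsupp (\<lambda>c. if c = e then s else 0). (\<lambda>i. fst p i + snd p i) = c}
          = {((\<lambda>i. c i - e i), e)}"
      using False by (auto simp: qsupp_def fun_shift_iff split: if_splits)
    then show ?thesis by (simp add: qmult_def)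
  qed
qed

lemma qmult_left_single:
  "qmult n L t (\<lambda>c. if c = e then s else 0) f =
   (\<lambda>c. s * f (\<lambda>i. c i - e i) * t powi (2 * sigma n L e (\<lambda>i. c i - e i)))"
proof
  fix c
  show "qmult n L t (\<lambda>c. if c = e then s else 0) f c =
     s * f (\<lambda>i. c i - e i) * t powi (2 * sigma n L e (\<lambda>i. c i - e i))"
  proof (cases "s = 0 \<or> f (\<lambda>i. c i - e i) = 0")
    case True
    have E: "{p \<in> qsupp (\<lambda>c. if c = e then s else 0) \<times> qsupp f. (\<lambda>i. fst p i + snd p i) = c} = {}"
      using True by (auto simp: qsupp_def fun_shift_iff2 split: if_splits)
    have "qmult n L t (\<lambda>c. if c = e then s else 0) f c = 0" unfolding qmult_def by (simp only: E sum.empty)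
    then show ?thesis using True by auto
  next
    case False
    have "{p \<in> qsupp (\<lambda>c. if c = e then s else 0) \<times> qsupp f. (\<lambda>i. fst p i + snd p i) = c}
          = {(e, (\<lambda>i. c i - e i))}"
      using False by (auto simp: qsupp_def fun_shift_iff2 split: if_splits)
    then show ?thesis by (simp add: qmult_def)
  qed
qed

lemma sigma_zero1[simp]: "sigma n L (\<lambda>i. 0) x = 0" by (simp add: sigma_def)
lemma sigma_zero2[simp]: "sigma n L x (\<lambda>i. 0) = 0" by (simp add: sigma_def)

lemma qone_single: "qone = (\<lambda>c. if c = (\<lambda>i. 0) then 1 else 0)" by (simp add: qone_def)
lemma qscale_qone: "qscale s qone = (\<lambda>c. if c = (\<lambda>i. 0) then s else 0)"
  by (auto simp: qscale_def qone_def)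
lemma xvar_single: "xvar i = (\<lambda>c. if c = uv i then 1 else 0)" by (simp add: xvar_def uv_def)
lemma mon_single: "mon a = (\<lambda>c. if c = a then 1 else 0)" by (simp add: mon_def)

lemma qmult_qone_right[simp]: "qmult n L t f qone = f"
  by (simp add: qone_single qmult_right_single)

lemma qmult_scale_left: "qmult n L t (qscale s qone) f = qscale s f"
  by (simp only: qscale_qone qmult_left_single) (simp add: qscale_def)

lemma qmult_mon_xvar:
  "qmult n L t (mon a) (xvar i) = qscale (t powi (2 * sigma n L a (uv i))) (mon (\<lambda>j. a j + uv i j))"
proof -
  have e: "((\<lambda>j. c j - uv i j) = a) = (c = (\<lambda>j. a j + uv i j))" for c
    using fun_shift_iff[of a "uv i" c] by auto
  show ?thesis
    by (auto simp: xvar_single mon_single qmult_right_single qscale_def e intro!: ext)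
qed

definition aff_exp :: "nat \<Rightarrow> expo \<Rightarrow> bool" where
  "aff_exp n a \<longleftrightarrow> (\<forall>j. 0 \<le> a j) \<and> (\<forall>j\<ge>n. a j = 0)"

lemma qaffine_iff: "f \<in> qaffine n \<longleftrightarrow> finite (qsupp f) \<and> (\<forall>a\<in>qsupp f. aff_exp n a)"
  by (auto simp: qaffine_def qtorus_def aff_exp_def)

lemma qsupp_mon[simp]: "qsupp (mon a) = {a}" by (auto simp: qsupp_def mon_def)

lemma mon_qaffine: "aff_exp n a \<Longrightarrow> mon a \<in> qaffine n" by (simp add: qaffine_iff)

lemma qsupp_qscale: "qsupp (qscale s f) \<subseteq> qsupp f" by (auto simp: qsupp_def qscale_def)
lemma qsupp_qadd: "qsupp (qadd f g) \<subseteq> qsupp f \<union> qsupp g" by (auto simp: qsupp_def qadd_def)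

lemma qscale_qaffine: "f \<in> qaffine n \<Longrightarrow> qscale s f \<in> qaffine n"
  using qsupp_qscale[of s f] by (auto simp: qaffine_iff intro: finite_subset)
lemma qadd_qaffine: "f \<in> qaffine n \<Longrightarrow> g \<in> qaffine n \<Longrightarrow> qadd f g \<in> qaffine n"
  using qsupp_qadd[of f g] by (auto simp: qaffine_iff intro: finite_subset)
lemma qzero_qaffine: "qzero \<in> qaffine n" by (simp add: qaffine_iff qsupp_def qzero_def)
lemma restrict_qaffine: "f \<in> qaffine n \<Longrightarrow> (\<lambda>c. if c \<in> F then f c else 0) \<in> qaffine n"
proof -
  assume f: "f \<in> qaffine n"
  have "qsupp (\<lambda>c. if c \<in> F then f c else 0) \<subseteq> qsupp f" by (auto simp: qsupp_def)
  then show ?thesis using f by (auto simp: qaffine_iff intro: finite_subset)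
qed

lemma qsupp_qmult: "qsupp (qmult n L t f g) \<subseteq> (\<lambda>(x,y). \<lambda>i. x i + y i) ` (qsupp f \<times> qsupp g)"
proof
  fix c assume "c \<in> qsupp (qmult n L t f g)"
  then have nz: "qmult n L t f g c \<noteq> 0" by (simp add: qsupp_def)
  have "{p \<in> qsupp f \<times> qsupp g. (\<lambda>i. fst p i + snd p i) = c} \<noteq> {}"
  proof
    assume E: "{p \<in> qsupp f \<times> qsupp g. (\<lambda>i. fst p i + snd p i) = c} = {}"
    have "qmult n L t f g c = 0" unfolding qmult_def by (simp only: E sum.empty)
    then show False using nz by simp
  qed
  then obtain x y where "x \<in> qsupp f" "y \<in> qsupp g" "(\<lambda>i. x i + y i) = c" by auto
  then show "c \<in> (\<lambda>(x,y). \<lambda>i. x i + y i) ` (qsupp f \<times> qsupp g)" by force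
qed

lemma qmult_qaffine: "f \<in> qaffine n \<Longrightarrow> g \<in> qaffine n \<Longrightarrow> qmult n L t f g \<in> qaffine n"
proof -
  assume f: "f \<in> qaffine n" and g: "g \<in> qaffine n"
  have fin: "finite ((\<lambda>(x,y). \<lambda>i. x i + y i) ` (qsupp f \<times> qsupp g))"
    using f g by (auto simp: qaffine_iff)
  have "\<forall>c\<in>(\<lambda>(x,y). \<lambda>i. x i + y i) ` (qsupp f \<times> qsupp g). aff_exp n c"
    using f g by (fastforce simp: qaffine_iff aff_exp_def add_nonneg_nonneg)
  then show ?thesis using qsupp_qmult[of n L t f g] fin
    by (auto simp: qaffine_iff intro: finite_subset)
qed

lemma uv_aff: "i < n \<Longrightarrow> aff_exp n (uv i)" by (simp add: aff_exp_def uv_def)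

lemma xvar_qaffine: "i < n \<Longrightarrow> xvar i \<in> qaffine n"
  using mon_qaffine[OF uv_aff] by (simp add: xvar_def mon_def uv_def)

lemma qscale_qscale: "qscale x (qscale y f) = qscale (x * y) f" by (simp add: qscale_def mult.assoc)
lemma qscale_one[simp]: "qscale 1 f = f" by (simp add: qscale_def)

lemma mon_shift:
  assumes "t \<noteq> 0"
  shows "mon (\<lambda>j. a j + uv i j) = qscale (inverse (t powi (2 * sigma n L a (uv i)))) (qmult n L t (mon a) (xvar i))"
  using assms by (simp add: qmult_mon_xvar qscale_qscale)

lemma xvar_R: "i < n \<Longrightarrow> xvar i \<in> qca m n B L t"
proof -
  assume "i < n"
  then have "xvar i \<in> cluster_vars m n B L t"
    unfolding cluster_vars_def using seeds.init[of B L m n t] by force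
  then show ?thesis unfolding qca_def by (rule qgen.gen)
qed

lemma scale_one_R: "qscale s qone \<in> qca m n B L t"
  unfolding qca_def by (intro qgen.scale qgen.one)

lemma mon_R:
  assumes t: "t \<noteq> 0" and a: "aff_exp n a"
  shows "mon a \<in> qca m n B L t"
proof -
  have "\<forall>a. aff_exp n a \<and> (\<Sum>j<n. nat (a j)) = N \<longrightarrow> mon a \<in> qca m n B L t" for N
  proof (induction N)
    case 0
    show ?case
    proof (intro allI impI)
      fix a assume h: "aff_exp n a \<and> (\<Sum>j<n. nat (a j)) = 0"
      have "a = (\<lambda>i. 0)"
      proof
        fix j show "a j = 0"
        proof (cases "j < n")
          case True
          then have "nat (a j) = 0" using h by (simp add: sum_eq_0_iff)
          then show ?thesis using h by (simp add: aff_exp_def) (metis antisym)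
        next
          case False then show ?thesis using h by (simp add: aff_exp_def)
        qed
      qed
      then have "mon a = qone" by (simp add: mon_def qone_def)
      then show "mon a \<in> qca m n B L t" unfolding qca_def by (simp add: qgen.one)
    qed
  next
    case (Suc N)
    show ?case
    proof (intro allI impI)
      fix a assume h: "aff_exp n a \<and> (\<Sum>j<n. nat (a j)) = Suc N"
      then obtain i where i: "i < n" "a i > 0"
        by (metis (no_types, lifting) aff_exp_def nat_0_iff not_less sum.neutral lessThan_iff nat.distinct(1))
      define a' where "a' = (\<lambda>j. a j - uv i j)"
      have aa: "(\<lambda>j. a' j + uv i j) = a" by (simp add: a'_def)
      have "aff_exp n a'" using h i by (auto simp: aff_exp_def a'_def uv_def)
      moreover have "(\<Sum>j<n. nat (a' j)) = N"
      proof -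
        have "(\<Sum>j<n. nat (a j)) = (\<Sum>j<n. nat (a' j) + (if j = i then 1 else 0))"
          using i by (intro sum.cong) (auto simp: a'_def uv_def)
        also have "\<dots> = (\<Sum>j<n. nat (a' j)) + 1" using i by (simp add: sum.distrib)
        finally show ?thesis using h by simp
      qed
      ultimately have "mon a' \<in> qca m n B L t" using Suc.IH by blast
      then have "qmult n L t (mon a') (xvar i) \<in> qca m n B L t"
        using xvar_R[OF i(1)] unfolding qca_def by (rule qgen.mult)
      then show "mon a \<in> qca m n B L t"
        using mon_shift[OF t, of a' i n L] aa unfolding qca_def by (metis qgen.scale)
    qed
  qed
  then show ?thesis using a by blast
qed

lemma restrict_R:
  assumes t: "t \<noteq> 0" and fin: "finite F" and F: "\<forall>a\<in>F. aff_exp n a"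
  shows "(\<lambda>c. if c \<in> F then f c else 0) \<in> qca m n B L t"
  using fin F
proof (induction F rule: finite_induct)
  case empty
  have "(\<lambda>c. if c \<in> {} then f c else 0) = qscale 0 qone" by (simp add: qscale_def)
  then show ?case using scale_one_R by metis
next
  case (insert x F)
  have e: "(\<lambda>c. if c \<in> insert x F then f c else 0) = qadd (qscale (f x) (mon x)) (\<lambda>c. if c \<in> F then f c else 0)"
    using insert.hyps by (auto simp: qadd_def qscale_def mon_def)
  have "mon x \<in> qca m n B L t" using mon_R[OF t] insert.prems by simp
  then have "qscale (f x) (mon x) \<in> qca m n B L t" unfolding qca_def by (rule qgen.scale)
  moreover have "(\<lambda>c. if c \<in> F then f c else 0) \<in> qca m n B L t" using insert by simp
  ultimately show ?case unfolding e qca_def by (rule qgen.add)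
qed

lemma restrict_supp: "(\<lambda>c. if c \<in> qsupp f then f c else 0) = f" by (auto simp: qsupp_def)

lemma qaffine_R: "t \<noteq> 0 \<Longrightarrow> f \<in> qaffine n \<Longrightarrow> f \<in> qca m n B L t"
  using restrict_R[of t "qsupp f" n f] by (simp add: qaffine_iff restrict_supp)

lemma zdep:
  fixes v :: "nat \<Rightarrow> expo"
  shows "finite S \<Longrightarrow> k < card S \<Longrightarrow> \<exists>c. (\<exists>i\<in>S. c i \<noteq> 0) \<and> (\<forall>j<k. (\<Sum>i\<in>S. c i * v i j) = 0)"
proof (induction k arbitrary: S v)
  case 0
  then obtain i where "i \<in> S" by fastforce
  then show ?case by (rule_tac x="\<lambda>_. 1" in exI) auto
next
  case (Suc k)
  show ?case
  proof (cases "\<exists>p\<in>S. v p k \<noteq> 0")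
    case False
    obtain c where c: "\<exists>i\<in>S. c i \<noteq> 0" "\<forall>j<k. (\<Sum>i\<in>S. c i * v i j) = 0"
      using Suc.IH[of S v] Suc.prems by auto
    have "\<forall>j<Suc k. (\<Sum>i\<in>S. c i * v i j) = 0"
    proof (intro allI impI)
      fix j assume "j < Suc k"
      then have "j < k \<or> j = k" by auto
      then show "(\<Sum>i\<in>S. c i * v i j) = 0" using c False by auto
    qed
    then show ?thesis using c by blast
  next
    case True
    then obtain p where p: "p \<in> S" "v p k \<noteq> 0" by blast
    define S' where "S' = S - {p}"
    define w where "w = (\<lambda>i j. v p k * v i j - v i k * v p j)"
    have fS': "finite S'" using Suc.prems by (simp add: S'_def)
    have cS': "k < card S'" using Suc.prems p by (simp add: S'_def)
    obtain c where c: "\<exists>i\<in>S'. c i \<noteq> 0" "\<forall>j<k. (\<Sum>i\<in>S'. c i * w i j) = 0"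
      using Suc.IH[OF fS' cS', of w] by auto
    define d where "d = (\<lambda>i. if i = p then - (\<Sum>l\<in>S'. c l * v l k) else c i * v p k)"
    have key: "(\<Sum>i\<in>S. d i * v i j) = (\<Sum>i\<in>S'. c i * w i j)" for j
    proof -
      have "(\<Sum>i\<in>S. d i * v i j) = d p * v p j + (\<Sum>i\<in>S'. d i * v i j)"
        using Suc.prems(1) p(1) unfolding S'_def by (simp add: sum.remove)
      also have "(\<Sum>i\<in>S'. d i * v i j) = (\<Sum>i\<in>S'. c i * v p k * v i j)"
        by (intro sum.cong) (auto simp: d_def S'_def)
      also have "d p * v p j = - (\<Sum>l\<in>S'. c l * v l k * v p j)"
        by (simp add: d_def sum_distrib_right)
      finally have "(\<Sum>i\<in>S. d i * v i j) = (\<Sum>i\<in>S'. c i * v p k * v i j) - (\<Sum>l\<in>S'. c l * v l k * v p j)"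
        by simp
      then show ?thesis by (simp add: w_def right_diff_distrib sum_subtractf ac_simps)
    qed
    have "\<forall>j<Suc k. (\<Sum>i\<in>S. d i * v i j) = 0"
    proof (intro allI impI)
      fix j assume "j < Suc k"
      then have "j < k \<or> j = k" by auto
      then show "(\<Sum>i\<in>S. d i * v i j) = 0"
      proof
        assume "j < k" then show ?thesis using key c by simp
      next
        assume "j = k" then show ?thesis using key by (simp add: w_def)
      qed
    qed
    moreover have "\<exists>i\<in>S. d i \<noteq> 0"
      using c(1) p(2) by (auto simp: d_def S'_def)
    ultimately show ?thesis by blast
  qed
qed

lemma zindep_len: "zindep k vs \<Longrightarrow> length vs \<le> k"
proof (rule ccontr)
  assume z: "zindep k vs" and "\<not> length vs \<le> k"
  then have "k < card {..<length vs}" by simp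
  from zdep[OF _ this, of "\<lambda>i. vs ! i"] obtain c where
    c: "\<exists>i\<in>{..<length vs}. c i \<noteq> 0" "\<forall>j<k. (\<Sum>i<length vs. c i * (vs ! i) j) = 0" by auto
  then show False using z unfolding zindep_def by auto
qed

lemma sigma_right_uv: "sigma n L x (uv i) = (\<Sum>p<n. if i < p then x p * L p i else 0)"
proof -
  have "(\<Sum>j<p. x p * L p j * uv i j) = (if i < p then x p * L p i else 0)" for p
  proof -
    have "(\<Sum>j<p. x p * L p j * uv i j) = (\<Sum>j<p. if j = i then x p * L p j else 0)"
      by (intro sum.cong) (auto simp: uv_def)
    also have "\<dots> = (if i < p then x p * L p i else 0)" by (simp add: sum.delta)
    finally show ?thesis .
  qed
  then show ?thesis by (simp add: sigma_def)
qed

lemma sigma_left_uv: "i < n \<Longrightarrow> sigma n L (uv i) x = (\<Sum>j<n. if j < i then L i j * x j else 0)"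
proof -
  assume i: "i < n"
  have "sigma n L (uv i) x = (\<Sum>p<n. if p = i then (\<Sum>j<p. L p j * x j) else 0)"
    unfolding sigma_def by (intro sum.cong) (auto simp: uv_def)
  also have "\<dots> = (\<Sum>j<i. L i j * x j)" using i by (simp add: sum.delta)
  also have "\<dots> = (\<Sum>j\<in>{j\<in>{..<n}. j < i}. L i j * x j)"
    using i by (intro sum.cong) auto
  also have "\<dots> = (\<Sum>j<n. if j < i then L i j * x j else 0)" by (rule sum.inter_filter) simp
  finally show ?thesis .
qed

lemma lw_eq:
  assumes skew: "\<forall>i<n. \<forall>j<n. L i j = - L j i" and i: "i < n"
  shows "sigma n L x (uv i) - sigma n L (uv i) x = - (\<Sum>j<n. L i j * x j)"
proof -
  have "L i i = - L i i" using skew i by blast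
  then have Lii: "L i i = 0" by simp
  have "sigma n L x (uv i) - sigma n L (uv i) x =
        (\<Sum>p<n. (if i < p then x p * L p i else 0) - (if p < i then L i p * x p else 0))"
    unfolding sigma_right_uv sigma_left_uv[OF i] by (rule sum_subtractf[symmetric])
  also have "\<dots> = (\<Sum>p<n. - (L i p * x p))"
  proof (intro sum.cong refl)
    fix p assume "p \<in> {..<n}"
    then have Lp: "L p i = - L i p" using skew i by blast
    consider "i < p" | "p < i" | "p = i" by linarith
    then show "(if i < p then x p * L p i else 0) - (if p < i then L i p * x p else 0) = - (L i p * x p)"
    proof cases
      case 1 then show ?thesis using Lp by simp
    next
      case 2 then show ?thesis by simp
    next
      case 3 then show ?thesis using Lii by simp
    qed
  qed
  finally show ?thesis by (simp add: sum_negf)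
qed

lemma sum_trunc:
  fixes k n :: nat
  assumes "k \<le> n" "\<forall>j\<ge>k. d j = 0"
  shows "(\<Sum>j<n. g j * (d j::int)) = (\<Sum>j<k. g j * d j)"
proof (rule sum.mono_neutral_right)
  show "\<forall>i\<in>{..<n} - {..<k}. g i * d i = 0"
  proof
    fix i assume "i \<in> {..<n} - {..<k}"
    then have "k \<le> i" by auto
    then show "g i * d i = 0" using assms(2) by simp
  qed
qed (use assms(1) in auto)


lemma separation:
  assumes skew: "\<forall>i<n. \<forall>j<n. L i j = - L j i" and st: "super_toric m n B L" and kn: "k \<le> n"
    and a: "aff_exp k a" and a': "aff_exp k a'" and ne: "a \<noteq> a'"
  shows "(\<exists>b\<in>kerB m n B. (\<Sum>i<n. b i * a i) \<noteq> (\<Sum>i<n. b i * a' i))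
       \<or> (\<exists>i<k. (\<Sum>j<n. L i j * a j) \<noteq> (\<Sum>j<n. L i j * a' j))"
proof (rule ccontr)
  assume "\<not> ?thesis"
  then have T: "\<forall>b\<in>kerB m n B. (\<Sum>i<n. b i * a i) = (\<Sum>i<n. b i * a' i)"
    and Lm: "\<forall>i<k. (\<Sum>j<n. L i j * a j) = (\<Sum>j<n. L i j * a' j)" by auto
  define d where "d = (\<lambda>j. a j - a' j)"
  have dz: "\<forall>j\<ge>k. d j = 0" using a a' by (simp add: aff_exp_def d_def)
  obtain j0 where j0: "j0 < k" "d j0 \<noteq> 0"
  proof -
    have "\<exists>j. d j \<noteq> 0" using ne by (auto simp: d_def fun_eq_iff)
    then obtain j where "d j \<noteq> 0" by blast
    with dz have "j < k" by (meson not_less)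
    with \<open>d j \<noteq> 0\<close> show ?thesis using that by blast
  qed
  have k1: "k \<in> {1..n}" using j0 kn by auto
  have oT: "(\<Sum>j<k. b j * d j) = 0" if "b \<in> kerB m n B" for b
  proof -
    have "(\<Sum>j<n. b j * d j) = 0" using T that by (simp add: d_def right_diff_distrib sum_subtractf)
    then show ?thesis using sum_trunc[OF kn dz, of b] by simp
  qed
  have oL: "(\<Sum>j<k. L i j * d j) = 0" if "i < k" for i
  proof -
    have "(\<Sum>j<n. L i j * d j) = 0" using Lm that by (simp add: d_def right_diff_distrib sum_subtractf)
    then show ?thesis using sum_trunc[OF kn dz, of "L i"] by simp
  qed
  define H where "H = {(\<lambda>i. u i + v i) | u v. u \<in> Tproj m n B k \<and> v \<in> ImL L k}"
  have oH: "(\<Sum>j<k. w j * d j) = 0" if "w \<in> H" for w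
  proof -
    obtain b c where b: "b \<in> kerB m n B" and
      w: "w = (\<lambda>i. (if i < k then b i else 0) + (if i < k then (\<Sum>l<k. L i l * c l) else 0))"
      using \<open>w \<in> H\<close> unfolding H_def Tproj_def ImL_def by blast
    have "(\<Sum>j<k. w j * d j) = (\<Sum>j<k. b j * d j) + (\<Sum>j<k. (\<Sum>l<k. L j l * c l) * d j)"
      by (simp add: w distrib_right sum.distrib)
    also have "(\<Sum>j<k. (\<Sum>l<k. L j l * c l) * d j) = (\<Sum>j<k. \<Sum>l<k. L j l * c l * d j)"
      by (simp add: sum_distrib_right)
    also have "\<dots> = (\<Sum>l<k. \<Sum>j<k. L j l * c l * d j)" by (rule sum.swap)
    also have "\<dots> = (\<Sum>l<k. - c l * (\<Sum>j<k. L l j * d j))"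
    proof (intro sum.cong refl)
      fix l assume l: "l \<in> {..<k}"
      have "(\<Sum>j<k. L j l * c l * d j) = (\<Sum>j<k. - c l * (L l j * d j))"
      proof (intro sum.cong refl)
        fix j assume "j \<in> {..<k}"
        then have "j < n" "l < n" using l kn by auto
        then have "L j l = - L l j" using skew by blast
        then show "L j l * c l * d j = - c l * (L l j * d j)" by simp
      qed
      then show "(\<Sum>j<k. L j l * c l * d j) = - c l * (\<Sum>j<k. L l j * d j)"
        by (simp add: sum_distrib_left)
    qed
    also have "\<dots> = 0" using oL by simp
    finally show ?thesis using oT[OF b] by simp
  qed
  define P where "P = (\<lambda>r. \<exists>vs. length vs = r \<and> set vs \<subseteq> H \<and> zindep k vs)"
  have P0: "P 0" by (simp add: P_def zindep_def)
  have Pb: "P y \<Longrightarrow> y \<le> k" for y using zindep_len by (auto simp: P_def)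
  have "grp_rank k H = k" using st k1 unfolding super_toric_def H_def by blast
  then have "P k" using GreatestI_nat[where P=P, OF P0 Pb] by (simp add: grp_rank_def P_def)
  then obtain vs where vs: "length vs = k" "set vs \<subseteq> H" "zindep k vs" by (auto simp: P_def)
  define v where "v = (\<lambda>i. if i < k then vs ! i else d)"
  obtain c where c: "\<exists>i\<in>{..<Suc k}. c i \<noteq> 0" "\<forall>j<k. (\<Sum>i\<in>{..<Suc k}. c i * v i j) = 0"
    using zdep[of "{..<Suc k}" k v] by auto
  have vH: "(\<Sum>j<k. v i j * d j) = 0" if "i < k" for i
  proof -
    have "vs ! i \<in> H" using vs that by (metis nth_mem subsetD)
    then show ?thesis using oH that by (simp add: v_def)
  qed
  have "0 = (\<Sum>j<k. d j * (\<Sum>i<Suc k. c i * v i j))" using c(2) by simp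
  also have "\<dots> = (\<Sum>j<k. \<Sum>i<Suc k. c i * (v i j * d j))"
    by (rule sum.cong[OF refl]) (simp only: sum_distrib_left ac_simps)
  also have "\<dots> = (\<Sum>i<Suc k. c i * (\<Sum>j<k. v i j * d j))"
    by (subst sum.swap) (simp add: sum_distrib_left)
  also have "\<dots> = c k * (\<Sum>j<k. v k j * d j)"
    using vH by simp
  also have "\<dots> = c k * (\<Sum>j<k. d j * d j)" by (simp add: v_def)
  finally have ck0: "c k * (\<Sum>j<k. d j * d j) = 0" by simp
  have "d j0 * d j0 \<le> (\<Sum>j<k. d j * d j)"
    by (rule member_le_sum) (use j0 in auto)
  moreover have "0 < d j0 * d j0" using j0 by (auto simp: zero_less_mult_iff linorder_neq_iff)
  ultimately have ck: "c k = 0" using ck0 by auto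
  have "\<forall>j<k. (\<Sum>i<length vs. c i * (vs ! i) j) = 0"
  proof (intro allI impI)
    fix j assume "j < k"
    then have "(\<Sum>i<Suc k. c i * v i j) = 0" using c(2) by simp
    then show "(\<Sum>i<length vs. c i * (vs ! i) j) = 0" using ck vs(1) by (simp add: v_def)
  qed
  then have "\<forall>i<k. c i = 0" using vs unfolding zindep_def by auto
  with ck c(1) show False using less_Suc_eq by auto
qed

lemma ideal_scale:
  "is_ideal n L t Rr J \<Longrightarrow> qscale s qone \<in> Rr \<Longrightarrow> y \<in> J \<Longrightarrow> qscale s y \<in> J"
  unfolding is_ideal_def by (metis qmult_scale_left)

lemma ideal_add: "is_ideal n L t Rr J \<Longrightarrow> x \<in> J \<Longrightarrow> y \<in> J \<Longrightarrow> qadd x y \<in> J"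
  unfolding is_ideal_def by blast

lemma ideal_multl: "is_ideal n L t Rr J \<Longrightarrow> r \<in> Rr \<Longrightarrow> y \<in> J \<Longrightarrow> qmult n L t r y \<in> J"
  unfolding is_ideal_def by blast

lemma ideal_multr: "is_ideal n L t Rr J \<Longrightarrow> r \<in> Rr \<Longrightarrow> y \<in> J \<Longrightarrow> qmult n L t y r \<in> J"
  unfolding is_ideal_def by blast

lemma aff_mono: "aff_exp k a \<Longrightarrow> k \<le> n \<Longrightarrow> aff_exp n a"
  by (auto simp: aff_exp_def)

lemma aff_zero: "aff_exp n (\<lambda>i. 0)" by (simp add: aff_exp_def)

lemma scale_one_aff: "qscale s qone \<in> qaffine n"
  using qscale_qaffine[OF mon_qaffine[OF aff_zero]] by (simp add: mon_def qone_def)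

lemma tpow_ne1:
  fixes t :: complex
  assumes t: "t \<noteq> 0" and q: "\<forall>N::nat. 0 < N \<longrightarrow> (t ^ 2) ^ N \<noteq> 1" and N: "N \<noteq> 0"
  shows "t powi (2 * N) \<noteq> 1"
proof -
  have e: "t powi (2 * N) = (t ^ 2) powi N" by (simp add: power_int_mult)
  show ?thesis
  proof (cases "N > 0")
    case True
    then have "(t ^ 2) powi N = (t ^ 2) ^ nat N" by (simp add: power_int_nonneg_exp)
    then show ?thesis using e q True by simp
  next
    case False
    then have "0 < nat (- N)" using N by simp
    then have ne: "(t ^ 2) ^ nat (- N) \<noteq> 1" using q by blast
    have "(t ^ 2) powi N = inverse ((t ^ 2) powi (- N))" by (simp add: power_int_minus[symmetric])
    also have "(t ^ 2) powi (- N) = (t ^ 2) ^ nat (- N)" using False by (simp add: power_int_nonneg_exp)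
    finally show ?thesis using e ne by (metis inverse_1 inverse_inverse_eq)
  qed
qed

lemma two_powi_inj: "(2::complex) powi x = 2 powi y \<Longrightarrow> x = y"
proof -
  assume h: "(2::complex) powi x = 2 powi y"
  have "(2::complex) = of_real 2" by simp
  then have "of_real ((2::real) powi x) = (of_real ((2::real) powi y) :: complex)"
    using h by (metis of_real_power_int)
  then have h2: "(2::real) powi x = 2 powi y" using of_real_eq_iff by blast
  show "x = y"
  proof (rule ccontr)
    assume "x \<noteq> y"
    then have "x < y \<or> y < x" by auto
    then show False using h2 power_int_strict_increasing[of _ _ "2::real"] by force
  qed
qed

lemma powi_mult_eq:
  fixes t :: complex
  assumes "t \<noteq> 0"
  shows "t powi (x::int) * t powi y = t powi (x + y)"
  using assms by (simp add: power_int_add)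

lemma powi_exp_lemma:
  fixes t :: complex
  assumes "t \<noteq> 0"
  shows "t powi (- 2 * (x - y)) * t powi (2 * x) = t powi (2 * y)"
proof -
  have "t powi (- 2 * (x - y)) * t powi (2 * x) = t powi (- 2 * (x - y) + 2 * x)"
    by (rule powi_mult_eq[OF assms])
  also have "- 2 * (x - y) + 2 * x = 2 * y" by simp
  finally show ?thesis .
qed


context
  fixes m n k :: nat and B L :: imat and t :: complex and I :: "qelt set"
  assumes t: "t \<noteq> 0" and q: "\<forall>N::nat. 0 < N \<longrightarrow> (t ^ 2) ^ N \<noteq> 1"
    and idl: "is_ideal n L t (qca m n B L t) I" and prp: "I \<noteq> qca m n B L t"
    and cp: "\<forall>a\<in>qca m n B L t. \<forall>b\<in>qca m n B L t. qmult n L t a b \<in> I \<longrightarrow> a \<in> I \<or> b \<in> I"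
    and tinv: "torus_invariant m n B I"
    and kn: "k \<le> n" and xk: "\<forall>i<k. xvar i \<notin> I"
    and skew: "\<forall>i<n. \<forall>j<n. L i j = - L j i" and st: "super_toric m n B L"
begin

lemma I_sub: "I \<subseteq> qca m n B L t" using idl by (simp add: is_ideal_def)

lemma scaleI: "y \<in> I \<Longrightarrow> qscale s y \<in> I"
  using ideal_scale[OF idl scale_one_R] by blast

lemma MI: "aff_exp k a \<Longrightarrow> mon a \<in> I \<Longrightarrow> False"
proof -
  have "\<forall>a. aff_exp k a \<and> (\<Sum>j<k. nat (a j)) = N \<longrightarrow> mon a \<notin> I" for N
  proof (induction N)
    case 0
    show ?case
    proof (intro allI impI)
      fix a assume h: "aff_exp k a \<and> (\<Sum>j<k. nat (a j)) = 0"
      have "a = (\<lambda>i. 0)"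
      proof
        fix j show "a j = 0"
        proof (cases "j < k")
          case True
          then have "nat (a j) = 0" using h by (simp add: sum_eq_0_iff)
          then show ?thesis using h by (simp add: aff_exp_def) (metis antisym)
        next
          case False then show ?thesis using h by (simp add: aff_exp_def)
        qed
      qed
      then have e: "mon a = qone" by (simp add: mon_def qone_def)
      show "mon a \<notin> I"
      proof
        assume "mon a \<in> I"
        then have "qone \<in> I" using e by simp
        then have "r \<in> I" if "r \<in> qca m n B L t" for r
          using ideal_multl[OF idl that, of qone] by simp
        then have "I = qca m n B L t" using I_sub by blast
        then show False using prp by simp
      qed
    qed
  next
    case (Suc N)
    show ?case
    proof (intro allI impI)
      fix a assume h: "aff_exp k a \<and> (\<Sum>j<k. nat (a j)) = Suc N"
      then obtain i where i: "i < k" "a i > 0"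
        by (metis (no_types, lifting) aff_exp_def nat_0_iff not_less sum.neutral lessThan_iff nat.distinct(1))
      define a' where "a' = (\<lambda>j. a j - uv i j)"
      have aa: "(\<lambda>j. a' j + uv i j) = a" by (simp add: a'_def)
      have a'k: "aff_exp k a'" using h i by (auto simp: aff_exp_def a'_def uv_def)
      moreover have "(\<Sum>j<k. nat (a' j)) = N"
      proof -
        have "(\<Sum>j<k. nat (a j)) = (\<Sum>j<k. nat (a' j) + (if j = i then 1 else 0))"
          using i by (intro sum.cong) (auto simp: a'_def uv_def)
        also have "\<dots> = (\<Sum>j<k. nat (a' j)) + 1" using i by (simp add: sum.distrib)
        finally show ?thesis using h by simp
      qed
      ultimately have nI: "mon a' \<notin> I" using Suc.IH by blast
      show "mon a \<notin> I"
      proof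
        assume "mon a \<in> I"
        then have "qmult n L t (mon a') (xvar i) \<in> I"
          using scaleI qmult_mon_xvar[of n L t a' i] aa by metis
        moreover have "mon a' \<in> qca m n B L t" using mon_R[OF t aff_mono[OF a'k kn]] .
        moreover have "xvar i \<in> qca m n B L t" using xvar_R i kn by simp
        ultimately show False using cp nI xk i by blast
      qed
    qed
  qed
  then show "aff_exp k a \<Longrightarrow> mon a \<in> I \<Longrightarrow> False" by blast
qed


lemma Zero: "f \<in> I \<Longrightarrow> f \<in> qaffine n \<Longrightarrow> \<forall>a\<in>qsupp f. aff_exp k a \<Longrightarrow> f = qzero"
proof (induction "card (qsupp f)" arbitrary: f rule: less_induct)
  case less
  have finf: "finite (qsupp f)" using less.prems(2) by (simp add: qaffine_iff)
  have sub_aff: "g \<in> qaffine n" if "qsupp g \<subseteq> qsupp f" for g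
    using that less.prems(2) finite_subset[OF that finf] by (auto simp: qaffine_iff)
  have card_less: "card (qsupp g) < card (qsupp f)" if "qsupp g \<subseteq> qsupp f - {a}" "a \<in> qsupp f" for g a
    by (rule psubset_card_mono[OF finf]) (use that in blast)
  show ?case
  proof (rule ccontr)
    assume nz: "f \<noteq> qzero"
    then obtain a where a: "a \<in> qsupp f" by (auto simp: qsupp_def qzero_def fun_eq_iff)
    show False
    proof (cases "qsupp f = {a}")
      case True
      define c where "c = f a"
      have c0: "c \<noteq> 0" using a by (simp add: c_def qsupp_def)
      have eq: "f = qscale c (mon a)"
        using True by (auto simp: qscale_def mon_def qsupp_def fun_eq_iff c_def)
      have "qscale (inverse c) f = qscale (inverse c * c) (mon a)" using eq by (simp add: qscale_qscale)
      then have "mon a = qscale (inverse c) f" using c0 by simp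
      then have "mon a \<in> I" using scaleI less.prems(1) by metis
      then show False using MI less.prems(3) a by blast
    next
      case False
      then obtain a' where a': "a' \<in> qsupp f" "a' \<noteq> a" using a by blast
      have ak: "aff_exp k a" "aff_exp k a'" using a a' less.prems(3) by auto
      from separation[OF skew st kn ak a'(2)[symmetric]]
      consider (T) b where "b \<in> kerB m n B" "(\<Sum>i<n. b i * a i) \<noteq> (\<Sum>i<n. b i * a' i)"
        | (Lam) i where "i < k" "(\<Sum>j<n. L i j * a j) \<noteq> (\<Sum>j<n. L i j * a' j)" by blast
      then show False
      proof cases
        case T
        define w where "w = (\<lambda>c. \<Sum>i<n. b i * c i)"
        define g where "g = qadd (toric_act n b 2 f) (qscale (- ((2::complex) powi w a)) f)"
        have gI: "g \<in> I" unfolding g_def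
          using ideal_add[OF idl] tinv T(1) less.prems(1) scaleI unfolding torus_invariant_def by simp
        have gc: "g c = (2 powi w c - 2 powi w a) * f c" for c
          by (simp add: g_def qadd_def toric_act_def qscale_def w_def algebra_simps)
        have gs: "qsupp g \<subseteq> qsupp f - {a}" by (auto simp: qsupp_def gc)
        have ga': "a' \<in> qsupp g"
        proof -
          have "w a' \<noteq> w a" using T(2) by (simp add: w_def)
          then have "(2::complex) powi w a' \<noteq> 2 powi w a" using two_powi_inj by blast
          then show ?thesis using a' by (simp add: qsupp_def gc)
        qed
        have "g = qzero"
          using less.hyps[OF card_less[OF gs a] gI sub_aff] gs less.prems(3) by blast
        then show False using ga' by (simp add: qsupp_def qzero_def)
      next
        case Lam
        have iN: "i < n" using Lam(1) kn by simp
        define lw where "lw = (\<lambda>x. sigma n L x (uv i) - sigma n L (uv i) x)"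
        define r where "r = t powi (2 * lw a)"
        define h where "h = (\<lambda>d. f d * (1 - r * t powi (- 2 * lw d)))"
        define gg where "gg = qadd (qmult n L t f (xvar i)) (qscale (- r) (qmult n L t (xvar i) f))"
        have ggI: "gg \<in> I" unfolding gg_def
          using ideal_add[OF idl] ideal_multl[OF idl] ideal_multr[OF idl] xvar_R[OF iN] less.prems(1) scaleI
          by simp
        have hgg: "qmult n L t h (xvar i) = gg"
        proof
          fix c
          define d where "d = (\<lambda>j. c j - uv i j)"
          have "t powi (- 2 * lw d) * t powi (2 * sigma n L d (uv i)) = t powi (2 * sigma n L (uv i) d)"
            unfolding lw_def by (rule powi_exp_lemma[OF t])
          then show "qmult n L t h (xvar i) c = gg c"
            by (simp add: xvar_single qmult_right_single qmult_left_single gg_def qadd_def qscale_def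
                 h_def d_def[symmetric] algebra_simps)
        qed
        have hs: "qsupp h \<subseteq> qsupp f" by (auto simp: qsupp_def h_def)
        have hR: "h \<in> qca m n B L t" using qaffine_R[OF t sub_aff[OF hs]] .
        have hI: "h \<in> I" using cp hR xvar_R[OF iN] ggI hgg xk Lam(1) by metis
        have ha: "h a = 0"
        proof -
          have "r * t powi (- 2 * lw a) = t powi (2 * lw a + - 2 * lw a)"
            unfolding r_def by (rule powi_mult_eq[OF t])
          then show ?thesis by (simp add: h_def)
        qed
        have ha': "h a' \<noteq> 0"
        proof -
          have "lw a = - (\<Sum>j<n. L i j * a j)" "lw a' = - (\<Sum>j<n. L i j * a' j)"
            unfolding lw_def using lw_eq[OF skew iN] by auto
          then have ne: "lw a - lw a' \<noteq> 0" using Lam(2) by simp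
          have "r * t powi (- 2 * lw a') = t powi (2 * lw a + - 2 * lw a')"
            unfolding r_def by (rule powi_mult_eq[OF t])
          also have "2 * lw a + - 2 * lw a' = 2 * (lw a - lw a')" by simp
          finally have "r * t powi (- 2 * lw a') \<noteq> 1" using tpow_ne1[OF t q ne] by simp
          then show ?thesis using a' by (simp add: h_def qsupp_def)
        qed
        have hs2: "qsupp h \<subseteq> qsupp f - {a}" using hs ha by (auto simp: qsupp_def)
        have "h = qzero"
          using less.hyps[OF card_less[OF hs2 a] hI sub_aff[OF hs]] hs less.prems(3) by blast
        then show False using ha' by (simp add: qzero_def)
      qed
    qed
  qed
qed

end


lemma Gen:
  assumes J: "is_ideal n L t (qaffine n) J" and xJ: "\<forall>j. k \<le> j \<and> j < n \<longrightarrow> xvar j \<in> J"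
    and t: "t \<noteq> 0" and f: "f \<in> qaffine n" and na: "\<forall>a\<in>qsupp f. \<not> aff_exp k a"
  shows "f \<in> J"
proof -
  have monJ: "mon x \<in> J" if x: "x \<in> qsupp f" for x
  proof -
    have xn: "aff_exp n x" using f x by (simp add: qaffine_iff)
    obtain j where j: "k \<le> j" "x j \<noteq> 0" using na x xn by (auto simp: aff_exp_def)
    have jn: "j < n" using j xn by (meson aff_exp_def not_less)
    have xj: "x j > 0" using j xn by (simp add: aff_exp_def order_le_neq_trans)
    define x' where "x' = (\<lambda>i. x i - uv j i)"
    have xx: "(\<lambda>i. x' i + uv j i) = x" by (simp add: x'_def)
    have "aff_exp n x'" using xn xj jn by (auto simp: aff_exp_def x'_def uv_def)
    then have "qmult n L t (mon x') (xvar j) \<in> J"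
      using ideal_multl[OF J mon_qaffine] xJ j jn by blast
    then show ?thesis using mon_shift[OF t, of x' j n L] xx ideal_scale[OF J scale_one_aff] by metis
  qed
  have "F \<subseteq> qsupp f \<Longrightarrow> (\<lambda>c. if c \<in> F then f c else 0) \<in> J" if "finite F" for F
    using that
  proof (induction F rule: finite_induct)
    case empty
    have "(\<lambda>c. if c \<in> {} then f c else 0) = qzero" by (simp add: qzero_def)
    then show ?case using J by (simp add: is_ideal_def)
  next
    case (insert x F)
    have e: "(\<lambda>c. if c \<in> insert x F then f c else 0) = qadd (qscale (f x) (mon x)) (\<lambda>c. if c \<in> F then f c else 0)"
      using insert.hyps by (auto simp: qadd_def qscale_def mon_def)
    have "qscale (f x) (mon x) \<in> J" using monJ insert.prems ideal_scale[OF J scale_one_aff] by blast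
    then show ?case unfolding e using ideal_add[OF J] insert by blast
  qed
  then show ?thesis using f by (metis qaffine_iff restrict_supp subset_refl)
qed

theorem mainTheorem3:
  fixes m n k :: nat and B L :: imat and t :: complex and I :: "qelt set"
  assumes "compatible m n B L"
    and "t \<noteq> 0" and "\<forall>N::nat. 0 < N \<longrightarrow> (t ^ 2) ^ N \<noteq> 1"
    and "\<forall>P. prime_ideal n L t (qca m n B L t) P \<longrightarrow> completely_prime n L t (qca m n B L t) P"
    and "super_toric m n B L"
    and "prime_ideal n L t (qca m n B L t) I"
    and "torus_invariant m n B I"
    and "I \<noteq> {qzero}"
    and "k \<le> n"
    and "\<forall>i<n. (xvar i \<in> I \<longleftrightarrow> k \<le> i)"
  shows "I \<inter> qaffine n = ideal_gen n L t (qaffine n) (xvar ` {k..<n})"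
proof -
  note comp = assms(1) and t = assms(2) and q = assms(3) and st = assms(5) and pr = assms(6)
    and tinv = assms(7) and kn = assms(9) and xs = assms(10)
  have skew: "\<forall>i<n. \<forall>j<n. L i j = - L j i" using comp unfolding compatible_def by blast
  have idl: "is_ideal n L t (qca m n B L t) I" and prp: "I \<noteq> qca m n B L t"
    using pr by (auto simp: prime_ideal_def)
  have cp: "\<forall>a\<in>qca m n B L t. \<forall>b\<in>qca m n B L t. qmult n L t a b \<in> I \<longrightarrow> a \<in> I \<or> b \<in> I"
    using assms(4) pr unfolding completely_prime_def by blast
  have xk: "\<forall>i<k. xvar i \<notin> I"
  proof (intro allI impI)
    fix i assume "i < k"
    then show "xvar i \<notin> I" using xs kn by simp
  qed
  have xJ: "\<forall>j. k \<le> j \<and> j < n \<longrightarrow> xvar j \<in> I \<inter> qaffine n" using xs xvar_qaffine by blast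
  have c2: "qzero \<in> I \<inter> qaffine n" using idl qzero_qaffine by (simp add: is_ideal_def)
  have c3: "\<forall>a\<in>I \<inter> qaffine n. \<forall>b\<in>I \<inter> qaffine n. qadd a b \<in> I \<inter> qaffine n"
    using ideal_add[OF idl] qadd_qaffine by blast
  have c4: "\<forall>a\<in>I \<inter> qaffine n. \<forall>r\<in>qaffine n. qmult n L t r a \<in> I \<inter> qaffine n \<and> qmult n L t a r \<in> I \<inter> qaffine n"
  proof (intro ballI)
    fix a r assume a: "a \<in> I \<inter> qaffine n" and r: "r \<in> qaffine n"
    have rR: "r \<in> qca m n B L t" using qaffine_R[OF t r] .
    show "qmult n L t r a \<in> I \<inter> qaffine n \<and> qmult n L t a r \<in> I \<inter> qaffine n"
      using ideal_multl[OF idl rR] ideal_multr[OF idl rR] qmult_qaffine a r by blast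
  qed
  have IA: "is_ideal n L t (qaffine n) (I \<inter> qaffine n)"
    unfolding is_ideal_def using c2 c3 c4 by blast
  show ?thesis
  proof
    show "ideal_gen n L t (qaffine n) (xvar ` {k..<n}) \<subseteq> I \<inter> qaffine n"
      unfolding ideal_gen_def using IA xJ by auto
  next
    show "I \<inter> qaffine n \<subseteq> ideal_gen n L t (qaffine n) (xvar ` {k..<n})"
    proof
      fix f assume f: "f \<in> I \<inter> qaffine n"
      define f0 where "f0 = (\<lambda>c. if c \<in> {a. aff_exp k a} then f c else 0)"
      define f1 where "f1 = (\<lambda>c. if c \<in> {a. \<not> aff_exp k a} then f c else 0)"
      have f1A: "f1 \<in> qaffine n" using f restrict_qaffine unfolding f1_def by blast
      have f1na: "\<forall>a\<in>qsupp f1. \<not> aff_exp k a" by (simp add: f1_def qsupp_def)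
      have f1I: "f1 \<in> I" using Gen[OF IA xJ t f1A f1na] by blast
      have f0e: "f0 = qadd f (qscale (- 1) f1)" by (rule ext) (simp add: f0_def f1_def qadd_def qscale_def)
      have f0I: "f0 \<in> I" unfolding f0e
        using ideal_add[OF idl] ideal_scale[OF idl scale_one_R] f f1I by blast
      have f0A: "f0 \<in> qaffine n" using f restrict_qaffine unfolding f0_def by blast
      have f0a: "\<forall>a\<in>qsupp f0. aff_exp k a" by (simp add: f0_def qsupp_def)
      have "f0 = qzero"
        by (rule Zero[OF t q idl prp cp tinv kn xk skew st f0I f0A f0a])
      then have ff: "f = f1"
      proof -
        assume z: "f0 = qzero"
        show "f = f1"
        proof
          fix c show "f c = f1 c"
          proof (cases "aff_exp k c")
            case True
            then have "f0 c = 0" using z by (simp add: qzero_def)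
            then show ?thesis using True by (simp add: f0_def f1_def)
          next
            case False then show ?thesis by (simp add: f1_def)
          qed
        qed
      qed
      show "f \<in> ideal_gen n L t (qaffine n) (xvar ` {k..<n})"
        unfolding ideal_gen_def
      proof
        fix J assume "J \<in> {J. is_ideal n L t (qaffine n) J \<and> xvar ` {k..<n} \<subseteq> J}"
        then have J: "is_ideal n L t (qaffine n) J" and xj: "\<forall>j. k \<le> j \<and> j < n \<longrightarrow> xvar j \<in> J"
          by auto
        show "f \<in> J" using Gen[OF J xj t f1A f1na] ff by simp
      qed
    qed
  qed
qed

end
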